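(* Let $s\in(0,1)$. Then there is a constant $C>0$ such that, as $\varepsilon\to0$, $$\int_{\mathbb{H}^N}|u_\varepsilon(\xi)|^2d\xi\ge O(\varepsilon^{Q-4s})+C\varepsilon^{2s}$$ and $$\int_{\mathbb{H}^N}|u_\varepsilon(\xi)|^{Q^*_s}d\xi=S_s^{\frac{Q}{2s}}+O(\varepsilon^{Q}).$$
   Context: $\mathbb{H}^N=\mathbb{R}^{2N+1}$ with group law $\xi\circ\xi'=(x+x',y+y',t+t'+2(x'\cdot y-y'\cdot x))$, Lebesgue measure, $Q=2N+2$, dilations $\delta_a(x,y,t)=(ax,ay,a^2t)$, homogeneous norm $|\xi|=((|x|^2+|y|^2)^2+t^2)^{1/4}$, balls $B_r(0)=\{|\xi|<r\}$, $Q^*_s=\frac{2Q}{Q-2s}$. $S_s>0$ is the sharp fractional Sobolev constant on $\mathbb{H}^N$. $U(x,y,t)=C_0(t^2+(1+|x|^2+|y|^2)^2)^{-\frac{Q-2s}{4}}$ ($C_0>0$), $\overline{u}=U/\|U\|_{L^{Q^*_s}(\mathbb{H}^N)}$, $u^*(\xi)=\overline{u}(\delta_{S_s^{-1/(2s)}}(\xi))$ (so that $\int|u^*|^{Q^*_s}=S_s^{Q/(2s)}$), $U_\varepsilon(\xi)=\varepsilon^{-\frac{Q-2s}{2}}u^*(\delta_{1/\varepsilon}(\xi))$. $\Omega\subseteq\mathbb{H}^N$ is bounded open, $r>0$ with $B_{4r}(0)\subset\Omega$, $\phi\in C^\infty(\mathbb{H}^N)$, $0\le\phi\le1$, $\phi=1$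 on $B_r(0)$, $\phi=0$ outside $B_{2r}(0)$, and $u_\varepsilon=U_\varepsilon\phi$. The first inequality means: there is a function $g(\varepsilon)=O(\varepsilon^{Q-4s})$ as $\varepsilon\to0$ with $\int|u_\varepsilon|^2\ge g(\varepsilon)+C\varepsilon^{2s}$. *)

theory Defs
  imports "HOL-Analysis.Analysis" "HOL-Library.Landau_Symbols"
begin

text \<open>Heisenberg group H^N = R^{2N+1}, points (x,y,t) with x,y in R^N (N = CARD('n)).\<close>
type_synonym 'n heis = "(real^'n) \<times> (real^'n) \<times> real"

definition heis_mult :: "'n::finite heis \<Rightarrow> 'n heis \<Rightarrow> 'n heis" where
  "heis_mult p q = (case p of (x,y,t) \<Rightarrow> case q of (x',y',t') \<Rightarrow>
     (x + x', y + y', t + t' + 2 * (x' \<bullet> y - y' \<bullet> x)))"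

definition hdim :: "'n::finite itself \<Rightarrow> real" where
  "hdim _ = 2 * real CARD('n) + 2"

definition crit_exp :: "'n::finite itself \<Rightarrow> real \<Rightarrow> real" where
  "crit_exp n s = 2 * hdim n / (hdim n - 2 * s)"

definition dil :: "real \<Rightarrow> 'n::finite heis \<Rightarrow> 'n heis" where
  "dil a p = (case p of (x,y,t) \<Rightarrow> (a *\<^sub>R x, a *\<^sub>R y, a\<^sup>2 * t))"

definition heis_norm :: "'n::finite heis \<Rightarrow> real" where
  "heis_norm p = (case p of (x,y,t) \<Rightarrow> ((norm x ^ 2 + norm y ^ 2)\<^sup>2 + t\<^sup>2) powr (1/4))"

definition hball :: "real \<Rightarrow> 'n::finite heis set" where
  "hball r = {p. heis_norm p < r}"

definition smooth_fun :: "('a::euclidean_space \<Rightarrow> real) \<Rightarrow> bool" where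
  "smooth_fun f \<longleftrightarrow> (\<exists>D :: 'a list \<Rightarrow> 'a \<Rightarrow> real.
      D [] = f \<and>
      (\<forall>bs. continuous_on UNIV (D bs)) \<and>
      (\<forall>bs b x. b \<in> Basis \<longrightarrow>
         ((\<lambda>h. D bs (x + h *\<^sub>R b)) has_real_derivative D (b # bs) x) (at 0)))"

definition U_fun :: "'n::finite itself \<Rightarrow> real \<Rightarrow> real \<Rightarrow> 'n heis \<Rightarrow> real" where
  "U_fun n C0 s p = (case p of (x,y,t) \<Rightarrow>
      C0 * (t\<^sup>2 + (1 + norm x ^ 2 + norm y ^ 2)\<^sup>2) powr (- (hdim n - 2 * s) / 4))"

definition ubar :: "'n::finite itself \<Rightarrow> real \<Rightarrow> real \<Rightarrow> 'n heis \<Rightarrow> real" where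
  "ubar n C0 s p = U_fun n C0 s p /
      (integral\<^sup>L lborel (\<lambda>q. \<bar>U_fun n C0 s q\<bar> powr crit_exp n s)) powr (1 / crit_exp n s)"

definition ustar :: "'n::finite itself \<Rightarrow> real \<Rightarrow> real \<Rightarrow> real \<Rightarrow> 'n heis \<Rightarrow> real" where
  "ustar n C0 s S p = ubar n C0 s (dil (S powr (- 1 / (2 * s))) p)"

definition U_eps :: "'n::finite itself \<Rightarrow> real \<Rightarrow> real \<Rightarrow> real \<Rightarrow> real \<Rightarrow> 'n heis \<Rightarrow> real" where
  "U_eps n C0 s S \<epsilon> p = \<epsilon> powr (- (hdim n - 2 * s) / 2) * ustar n C0 s S (dil (1 / \<epsilon>) p)"

definition u_eps :: "'n::finite itself \<Rightarrow> real \<Rightarrow> real \<Rightarrow> real \<Rightarrow> ('n heis \<Rightarrow> real)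
     \<Rightarrow> real \<Rightarrow> 'n heis \<Rightarrow> real" where
  "u_eps n C0 s S \<phi> \<epsilon> p = U_eps n C0 s S \<epsilon> p * \<phi> p"

end

theory Submission
  imports Defs
begin


definition dilc :: "real \<Rightarrow> 'n::finite heis \<Rightarrow> real" where
  "dilc a j = (if snd (snd j) \<noteq> 0 then a\<^sup>2 else a)"

lemma dil_eq_sum:
  fixes p :: "'n::finite heis"
  shows "dil a p = (\<Sum>j\<in>Basis. (dilc a j * (p \<bullet> j)) *\<^sub>R j)"
proof (rule euclidean_eqI)
  fix b :: "'n heis" assume b: "b \<in> Basis"
  have "(\<Sum>j\<in>Basis. (dilc a j * (p \<bullet> j)) *\<^sub>R j) \<bullet> b = dilc a b * (p \<bullet> b)"
    using b by (simp add: inner_sum_left inner_Basis if_distrib cong: if_cong)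
  moreover have "dil a p \<bullet> b = dilc a b * (p \<bullet> b)"
    using b by (cases p) (auto simp: dil_def dilc_def Basis_prod_def inner_prod_def)
  ultimately show "dil a p \<bullet> b = (\<Sum>j\<in>Basis. (dilc a j * (p \<bullet> j)) *\<^sub>R j) \<bullet> b" by simp
qed

lemma prod_dilc:
  assumes "a > 0"
  shows "(\<Prod>j\<in>(Basis::'n::finite heis set). \<bar>dilc a j\<bar>) = a ^ (2 * CARD('n) + 2)"
proof -
  let ?t = "(0::real^'n, (0::real^'n, 1::real))"
  have t: "?t \<in> (Basis::'n heis set)" by (simp add: Basis_prod_def)
  have "(\<Prod>j\<in>(Basis::'n heis set). \<bar>dilc a j\<bar>) = \<bar>dilc a ?t\<bar> * (\<Prod>j\<in>Basis - {?t}. \<bar>dilc a j\<bar>)"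
    using t by (simp add: prod.remove)
  also have "(\<Prod>j\<in>(Basis::'n heis set) - {?t}. \<bar>dilc a j\<bar>) = (\<Prod>j\<in>(Basis::'n heis set) - {?t}. a)"
    using assms by (intro prod.cong) (auto simp: dilc_def Basis_prod_def)
  also have "\<dots> = a ^ (2 * CARD('n))"
    using t by (simp add: card_Diff_singleton mult_2)
  finally show ?thesis using assms by (simp add: dilc_def power_add power2_eq_square mult_ac mult_2)
qed

lemma dil_measurable[measurable]: "dil a \<in> borel \<rightarrow>\<^sub>M (borel :: 'n::finite heis measure)"
  unfolding dil_eq_sum[abs_def] by measurable

lemma nn_integral_dil:
  fixes f :: "'n::finite heis \<Rightarrow> ennreal"
  assumes [measurable]: "f \<in> borel_measurable borel" and a: "a > 0"
  shows "(\<integral>\<^sup>+p. f p \<partial>lborel) = ennreal (a ^ (2*CARD('n)+2)) * (\<integral>\<^sup>+p. f (dil a p) \<partial>lborel)"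
proof -
  have c: "\<And>j. j \<in> Basis \<Longrightarrow> dilc a j \<noteq> 0" using a by (simp add: dilc_def)
  note L = lborel_affine_euclidean[where c="dilc a :: 'n heis \<Rightarrow> real" and t="0::'n heis", OF c]
  have T: "(\<lambda>x. 0 + (\<Sum>j\<in>Basis. (dilc a j * (x \<bullet> j)) *\<^sub>R j)) = dil a"
    by (simp add: dil_eq_sum fun_eq_iff)
  have lb: "(lborel :: 'n heis measure) = density (distr lborel borel (dil a)) (\<lambda>_. ennreal (a ^ (2*CARD('n)+2)))"
    using L unfolding T prod_dilc[OF a, where 'n='n] .
  have "(\<integral>\<^sup>+p. f p \<partial>lborel) = (\<integral>\<^sup>+p. f p \<partial>density (distr lborel borel (dil a)) (\<lambda>_. ennreal (a ^ (2*CARD('n)+2))))"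
    using lb by simp
  also have "\<dots> = ennreal (a ^ (2*CARD('n)+2)) * (\<integral>\<^sup>+p. f (dil a p) \<partial>lborel)"
    by (simp add: nn_integral_density nn_integral_distr nn_integral_cmult)
  finally show ?thesis .
qed

lemma lborel_dil:
  assumes a: "a > 0"
  shows "(lborel :: 'n::finite heis measure) = density (distr lborel borel (dil a)) (\<lambda>_. ennreal (a ^ (2*CARD('n)+2)))"
proof -
  have c: "\<And>j. j \<in> Basis \<Longrightarrow> dilc a j \<noteq> 0" using a by (simp add: dilc_def)
  note L = lborel_affine_euclidean[where c="dilc a :: 'n heis \<Rightarrow> real" and t="0::'n heis", OF c]
  have T: "(\<lambda>x. 0 + (\<Sum>j\<in>Basis. (dilc a j * (x \<bullet> j)) *\<^sub>R j)) = dil a"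
    by (simp add: dil_eq_sum fun_eq_iff)
  show ?thesis
    using L unfolding T prod_dilc[OF a, where 'n='n] .
qed

lemma integral_dil:
  fixes f :: "'n::finite heis \<Rightarrow> real"
  assumes [measurable]: "f \<in> borel_measurable borel" and a: "a > 0"
  shows "integral\<^sup>L lborel f = a ^ (2*CARD('n)+2) * (\<integral>p. f (dil a p) \<partial>lborel)"
proof -
  have "integral\<^sup>L lborel f = integral\<^sup>L (density (distr lborel borel (dil a)) (\<lambda>_. ennreal (a ^ (2*CARD('n)+2)))) f"
    using lborel_dil[OF a, where 'n='n] by simp
  also have "\<dots> = integral\<^sup>L (distr lborel borel (dil a)) (\<lambda>x. a ^ (2*CARD('n)+2) *\<^sub>R f x)"
    by (rule integral_density) (use a in auto)
  also have "\<dots> = (\<integral>x. a ^ (2*CARD('n)+2) *\<^sub>R f (dil a x) \<partial>lborel)"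
    by (rule integral_distr) auto
  finally show ?thesis by simp
qed

lemma integrable_dil_iff:
  fixes f :: "'n::finite heis \<Rightarrow> real"
  assumes [measurable]: "f \<in> borel_measurable borel" and a: "a > 0"
  shows "integrable lborel (\<lambda>p. f (dil a p)) \<longleftrightarrow> integrable lborel f"
proof -
  have "integrable lborel f \<longleftrightarrow> integrable (density (distr lborel borel (dil a)) (\<lambda>_. ennreal (a ^ (2*CARD('n)+2)))) f"
    using lborel_dil[OF a, where 'n='n] by simp
  also have "\<dots> \<longleftrightarrow> integrable (distr lborel borel (dil a)) (\<lambda>x. a ^ (2*CARD('n)+2) *\<^sub>R f x)"
    by (rule integrable_density) (use a in auto)
  also have "\<dots> \<longleftrightarrow> integrable lborel (\<lambda>x. a ^ (2*CARD('n)+2) *\<^sub>R f (dil a x))"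
    by (rule integrable_distr_eq) auto
  finally show ?thesis using a by simp
qed

lemma dil_dil: "dil a (dil b p) = dil (a * b) p"
  by (cases p) (simp add: dil_def power_mult_distrib)

lemma heis_norm_alt:
  "heis_norm p = ((norm (fst p) ^ 2 + norm (fst (snd p)) ^ 2)\<^sup>2 + (snd (snd p))\<^sup>2) powr (1/4)"
  by (cases p) (simp add: heis_norm_def)

lemma heis_norm_measurable[measurable]: "heis_norm \<in> borel_measurable (borel :: 'n::finite heis measure)"
  unfolding heis_norm_alt[abs_def]
  by (intro powr_real_measurable borel_measurable_continuous_onI continuous_intros)

lemma heis_norm_nonneg: "heis_norm p \<ge> 0"
  by (simp add: heis_norm_alt)

lemma heis_norm_pow4:
  "heis_norm p ^ 4 = (norm (fst p) ^ 2 + norm (fst (snd p)) ^ 2)\<^sup>2 + (snd (snd p))\<^sup>2"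
proof -
  define X where "X = (norm (fst p) ^ 2 + norm (fst (snd p)) ^ 2)\<^sup>2 + (snd (snd p))\<^sup>2"
  have X: "X \<ge> 0" by (simp add: X_def)
  have "heis_norm p = X powr (1/4)" by (simp add: heis_norm_alt X_def)
  moreover have "(X powr (1/4)) ^ 4 = X"
  proof (cases "X = 0")
    case False
    then have "(X powr (1/4)) ^ 4 = (X powr (1/4)) powr (real 4)"
      using X by (subst powr_realpow) auto
    also have "\<dots> = X" using X False by (simp add: powr_powr)
    finally show ?thesis .
  qed simp
  ultimately show ?thesis by (simp add: X_def)
qed

lemma heis_norm_dil:
  assumes a: "a > 0"
  shows "heis_norm (dil a p) = a * heis_norm p"
proof -
  have "heis_norm (dil a p) ^ 4 = (a * heis_norm p) ^ 4"
    unfolding power_mult_distrib heis_norm_pow4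
    using a by (cases p) (simp add: dil_def power_mult_distrib algebra_simps power2_eq_square power4_eq_xxxx)
  then show ?thesis
    using a heis_norm_nonneg[of p] heis_norm_nonneg[of "dil a p"]
    by (meson power_eq_imp_eq_base zero_le_mult_iff less_imp_le zero_less_numeral)
qed

lemma hball_dil: "a > 0 \<Longrightarrow> dil a p \<in> hball r \<longleftrightarrow> p \<in> hball (r / a)"
  by (simp add: hball_def heis_norm_dil field_simps mult.commute)

lemma hball_measurable[measurable]: "hball r \<in> sets (borel :: 'n::finite heis measure)"
  unfolding hball_def by measurable

lemma norm_sq_heis: "(norm p)^2 = norm (fst p) ^ 2 + norm (fst (snd p)) ^ 2 + (snd (snd p))^2"
  by (cases p) (simp add: norm_Pair)

lemma norm_le_heis: "norm (p::'n::finite heis) \<le> heis_norm p + (heis_norm p)^2"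
proof -
  define h where "h = heis_norm p"
  define A where "A = norm (fst p) ^ 2 + norm (fst (snd p)) ^ 2"
  define T where "T = snd (snd p)"
  have h4: "h^4 = A^2 + T^2" unfolding h_def A_def T_def by (rule heis_norm_pow4)
  have h0: "h \<ge> 0" unfolding h_def by (rule heis_norm_nonneg)
  have A0: "A \<ge> 0" unfolding A_def by simp
  have "A^2 \<le> (h^2)^2" using h4 by (simp add: power_mult[symmetric])
  then have Ah: "A \<le> h^2" using A0 h0 by (meson power2_le_imp_le zero_le_power2)
  have "T^2 \<le> h^4" using h4 by simp
  have np: "(norm p)^2 = A + T^2" unfolding A_def T_def norm_sq_heis by simp
  have "(norm p)^2 \<le> (h + h^2)^2"
    using np Ah \<open>T^2 \<le> h^4\<close> h0 by (simp add: power2_eq_square power4_eq_xxxx algebra_simps)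
       (smt (verit) mult_nonneg_nonneg)
  then show ?thesis unfolding h_def[symmetric] using h0 by (meson power2_le_imp_le add_nonneg_nonneg zero_le_power2)
qed

lemma heis_le_norm: "(heis_norm (p::'n::finite heis))^4 \<le> (norm p)^4 + (norm p)^2"
proof -
  define A where "A = norm (fst p) ^ 2 + norm (fst (snd p)) ^ 2"
  define T where "T = snd (snd p)"
  have h4: "heis_norm p ^4 = A^2 + T^2" unfolding A_def T_def by (rule heis_norm_pow4)
  have np: "(norm p)^2 = A + T^2" unfolding A_def T_def norm_sq_heis by simp
  have A0: "A \<ge> 0" unfolding A_def by simp
  have "A \<le> (norm p)^2" using np by simp
  then have "A^2 \<le> ((norm p)^2)^2" using A0 by (rule power_mono)
  moreover have "T^2 \<le> (norm p)^2" using np A0 by simp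
  ultimately show ?thesis using h4 by (simp add: power_mult[symmetric])
qed

lemma bounded_hball: "bounded (hball R :: 'n::finite heis set)"
  unfolding bounded_iff
proof (intro exI ballI)
  fix p :: "'n heis" assume "p \<in> hball R"
  then have h: "heis_norm p < R" by (simp add: hball_def)
  have "norm p \<le> heis_norm p + (heis_norm p)^2" by (rule norm_le_heis)
  also have "\<dots> \<le> \<bar>R\<bar> + R^2"
    using h heis_norm_nonneg[of p] by (intro add_mono power_mono) auto
  finally show "norm p \<le> \<bar>R\<bar> + R^2" .
qed

lemma emeasure_hball_finite: "emeasure lborel (hball R :: 'n::finite heis set) < \<infinity>"
  by (rule emeasure_bounded_finite[OF bounded_hball])

lemma ball_sub_hball:
  assumes R: "R > 0"
  shows "ball (0::'n::finite heis) (min 1 (R^2/2)) \<subseteq> hball R"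
proof
  fix p :: "'n heis" assume "p \<in> ball 0 (min 1 (R^2/2))"
  then have n1: "norm p < 1" and n2: "norm p < R^2/2" by auto
  have n21: "(norm p)^2 \<le> 1" using n1 by (simp add: power_le_one)
  have "(norm p)^4 = (norm p)^2 * (norm p)^2" by (simp add: power4_eq_xxxx power2_eq_square)
  also have "\<dots> \<le> (norm p)^2" by (rule mult_left_le[OF n21]) simp
  finally have "(norm p)^4 \<le> (norm p)^2" .
  then have "(heis_norm p)^4 \<le> 2 * (norm p)^2" using heis_le_norm[of p] by simp
  also have "\<dots> < 2 * (R^2/2)^2"
    using n2 by (intro mult_strict_left_mono power_strict_mono) auto
  also have "\<dots> \<le> R^4" by (simp add: power2_eq_square power4_eq_xxxx field_simps)
      (use R in \<open>simp add: mult_nonneg_nonneg\<close>)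
  finally have "(heis_norm p)^4 < R^4" .
  then have "heis_norm p < R" using R heis_norm_nonneg[of p] by (meson power_less_imp_less_base less_imp_le)
  then show "p \<in> hball R" by (simp add: hball_def)
qed

lemma emeasure_hball_pos:
  assumes R: "R > 0"
  shows "emeasure lborel (hball R :: 'n::finite heis set) > 0"
proof -
  let ?d = "min 1 (R^2/2)"
  have d: "?d > 0" using R by simp
  have "0 < measure lborel (ball (0::'n heis) ?d)" by (rule content_ball_pos[OF d])
  then have "0 < emeasure lborel (ball (0::'n heis) ?d)"
    using emeasure_lborel_ball_finite[of "0::'n heis" ?d]
    by (simp add: emeasure_eq_ennreal_measure)
  also have "\<dots> \<le> emeasure lborel (hball R :: 'n heis set)"
    by (intro emeasure_mono ball_sub_hball[OF R]) simp
  finally show ?thesis .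
qed

lemma emeasure_hball_scale:
  assumes c: "c > 0"
  shows "emeasure lborel (hball c :: 'n::finite heis set) = ennreal (c ^ (2*CARD('n)+2)) * emeasure lborel (hball 1 :: 'n heis set)"
proof -
  have "emeasure lborel (hball c :: 'n heis set) = (\<integral>\<^sup>+p. indicator (hball c :: 'n heis set) p \<partial>lborel)"
    by simp
  also have "\<dots> = ennreal (c ^ (2*CARD('n)+2)) * (\<integral>\<^sup>+p. indicator (hball c) (dil c (p::'n heis)) \<partial>lborel)"
    using nn_integral_dil[OF _ c, of "indicator (hball c :: 'n heis set)"] by simp
  also have "(\<integral>\<^sup>+p. indicator (hball c) (dil c (p::'n heis)) \<partial>lborel) = (\<integral>\<^sup>+p. indicator (hball 1 :: 'n heis set) p \<partial>lborel)"
    by (rule nn_integral_cong) (use c in \<open>auto simp: hball_dil split: split_indicator\<close>)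
  finally show ?thesis by simp
qed

lemma shell_index:
  fixes h :: real
  assumes h: "h \<ge> 1"
  obtains k :: nat where "2 ^ k \<le> h" "h < 2 ^ (k+1)"
proof -
  define k where "k = nat \<lfloor>log 2 h\<rfloor>"
  have lg: "log 2 h \<ge> 0" using h by simp
  have rk: "real k = of_int \<lfloor>log 2 h\<rfloor>" using lg by (simp add: k_def)
  have k1: "real k \<le> log 2 h" using rk by simp
  have k2: "log 2 h < real k + 1" using rk by linarith
  have "(2::real) ^ k = 2 powr real k" by (simp add: powr_realpow)
  also have "\<dots> \<le> 2 powr log 2 h" using k1 by simp
  also have "\<dots> = h" using h by simp
  finally have a: "2 ^ k \<le> h" .
  have "h = 2 powr log 2 h" using h by simp
  also have "\<dots> < 2 powr (real k + 1)" using k2 by simp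
  also have "\<dots> = 2 ^ (k+1)" using powr_realpow[of 2 "k+1"] by (simp add: add.commute)
  finally have b: "h < 2 ^ (k+1)" .
  from a b show ?thesis by (rule that)
qed

lemma tail_integrable:
  assumes e: "e > real (2*CARD('n)+2)"
  shows "integrable lborel (\<lambda>p::'n::finite heis. indicator {p. 1 \<le> heis_norm p} p * heis_norm p powr (-e))"
proof (rule integrableI_nonneg)
  define Qn where "Qn = 2*CARD('n)+2"
  define r :: real where "r = 2 powr (-e)"
  define \<rho> where "\<rho> = r * 2 ^ Qn"
  have r0: "r > 0" by (simp add: r_def)
  have \<rho>0: "\<rho> \<ge> 0" using r0 by (simp add: \<rho>_def)
  have "\<rho> = 2 powr (real Qn - e)" by (simp add: \<rho>_def r_def powr_diff powr_realpow powr_minus divide_inverse mult.commute)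
  also have "\<dots> < 2 powr 0" using e by (intro powr_less_mono) (auto simp: Qn_def)
  finally have \<rho>1: "\<rho> < 1" by simp
  define F where "F k p = ennreal (r ^ k) * indicator (hball (2 ^ (k+1)) :: 'n heis set) p" for k p
  show "(\<lambda>p::'n heis. indicator {p. 1 \<le> heis_norm p} p * heis_norm p powr (-e)) \<in> borel_measurable lborel"
    by measurable
  show "AE p in lborel. 0 \<le> indicator {p. 1 \<le> heis_norm p} p * heis_norm p powr (-e)"
    by (simp)
  have pw: "ennreal (indicator {p. 1 \<le> heis_norm p} p * heis_norm p powr (-e)) \<le> (\<Sum>k. F k p)" for p :: "'n heis"
  proof (cases "1 \<le> heis_norm p")
    case False then show ?thesis by simp
  next
    case True
    then obtain k :: nat where k1: "2 ^ k \<le> heis_norm p" and k2: "heis_norm p < 2 ^ (k+1)"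
      by (rule shell_index)
    have "heis_norm p powr (-e) \<le> (2 ^ k) powr (-e)"
      using k1 e by (intro powr_mono2') auto
    also have "(2 ^ k :: real) powr (-e) = r ^ k"
      by (simp add: r_def powr_power powr_realpow[symmetric] powr_powr mult.commute)
    finally have "ennreal (indicator {p. 1 \<le> heis_norm p} p * heis_norm p powr (-e)) \<le> F k p"
      using True k2 by (auto simp: F_def hball_def intro!: ennreal_leI)
    also have "F k p = (\<Sum>i\<in>{k}. F i p)" by simp
    also have "\<dots> \<le> (\<Sum>i. F i p)" by (rule sum_le_suminf) auto
    finally show ?thesis .
  qed
  have "(\<integral>\<^sup>+p. ennreal (indicator {p. 1 \<le> heis_norm p} (p::'n heis) * heis_norm p powr (-e)) \<partial>lborel)
        \<le> (\<integral>\<^sup>+p. (\<Sum>k. F k p) \<partial>lborel)"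
    by (intro nn_integral_mono pw)
  also have "\<dots> = (\<Sum>k. \<integral>\<^sup>+p. F k p \<partial>lborel)"
    by (rule nn_integral_suminf) (simp add: F_def)
  also have "\<dots> = (\<Sum>k. ennreal (2 ^ Qn * \<rho> ^ k) * emeasure lborel (hball 1 :: 'n heis set))"
  proof (intro suminf_cong)
    fix k :: nat
    have "(\<integral>\<^sup>+p. F k p \<partial>lborel) = ennreal (r ^ k) * emeasure lborel (hball (2 ^ (k+1)) :: 'n heis set)"
      unfolding F_def by (simp add: nn_integral_cmult_indicator)
    also have "\<dots> = ennreal (r ^ k) * (ennreal ((2 ^ (k+1)) ^ Qn) * emeasure lborel (hball 1 :: 'n heis set))"
      unfolding Qn_def by (subst emeasure_hball_scale) auto
    also have "\<dots> = ennreal (r ^ k * (2 ^ (k+1)) ^ Qn) * emeasure lborel (hball 1 :: 'n heis set)"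
      using r0 by (simp add: ennreal_mult mult.assoc)
    also have "r ^ k * (2 ^ (k+1)) ^ Qn = 2 ^ Qn * \<rho> ^ k"
      by (simp add: \<rho>_def power_mult_distrib power_add power_mult[symmetric] mult.commute mult.left_commute)
    finally show "(\<integral>\<^sup>+p. F k p \<partial>lborel) = ennreal (2 ^ Qn * \<rho> ^ k) * emeasure lborel (hball 1 :: 'n heis set)" .
  qed
  also have "\<dots> = emeasure lborel (hball 1 :: 'n heis set) * (\<Sum>k. ennreal (2 ^ Qn * \<rho> ^ k))"
    by (simp add: mult.commute)
  also have "(\<Sum>k. ennreal (2 ^ Qn * \<rho> ^ k)) = ennreal (\<Sum>k. 2 ^ Qn * \<rho> ^ k)"
    using \<rho>0 \<rho>1 by (intro suminf_ennreal2) (auto intro!: summable_mult summable_geometric)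
  also have "emeasure lborel (hball 1 :: 'n heis set) * ennreal (\<Sum>k. 2 ^ Qn * \<rho> ^ k) < \<infinity>"
    using emeasure_hball_finite[of 1, where 'n='n] by (simp add: ennreal_mult_less_top)
  finally show "(\<integral>\<^sup>+p. ennreal (indicator {p. 1 \<le> heis_norm p} (p::'n heis) * heis_norm p powr (-e)) \<partial>lborel) < \<infinity>" .
qed



definition Dh :: "'n::finite heis \<Rightarrow> real" where
  "Dh p = (snd (snd p))\<^sup>2 + (1 + norm (fst p) ^ 2 + norm (fst (snd p)) ^ 2)\<^sup>2"

lemma U_alt: "U_fun n C0 s p = C0 * Dh p powr (- (hdim n - 2 * s) / 4)"
  by (cases p) (simp add: U_fun_def Dh_def)

lemma Dh_ge1: "Dh p \<ge> 1"
proof -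
  have "1 \<le> 1 + norm (fst p) ^ 2 + norm (fst (snd p)) ^ 2" by simp
  then have "1 \<le> (1 + norm (fst p) ^ 2 + norm (fst (snd p)) ^ 2)\<^sup>2"
    by (metis one_le_power)
  moreover have "0 \<le> (snd (snd p))\<^sup>2" by simp
  ultimately show ?thesis unfolding Dh_def by linarith
qed

lemma Dh_ge_h4: "Dh p \<ge> heis_norm p ^ 4"
proof -
  define A where "A = norm (fst p) ^ 2 + norm (fst (snd p)) ^ 2"
  have A0: "A \<ge> 0" by (simp add: A_def)
  have "A^2 \<le> (1 + A)^2" using A0 by (intro power_mono) auto
  moreover have "Dh p = (snd (snd p))\<^sup>2 + (1 + A)^2" by (simp add: Dh_def A_def add.assoc)
  moreover have "heis_norm p ^ 4 = A^2 + (snd (snd p))\<^sup>2" unfolding A_def by (rule heis_norm_pow4)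
  ultimately show ?thesis by linarith
qed

lemma Dh_measurable[measurable]: "Dh \<in> borel_measurable (borel :: 'n::finite heis measure)"
  unfolding Dh_def[abs_def]
  by (intro borel_measurable_continuous_onI continuous_intros)

lemma U_measurable[measurable]: "U_fun n C0 s \<in> borel_measurable borel"
  unfolding U_alt[abs_def]
  by (intro borel_measurable_times powr_real_measurable borel_measurable_const Dh_measurable)

lemma U_pos: "C0 > 0 \<Longrightarrow> U_fun n C0 s p > 0"
  using Dh_ge1[of p] by (simp add: U_alt)

lemma U_le: assumes "C0 > 0" "2 * s \<le> hdim n" shows "U_fun n C0 s p \<le> C0"
proof -
  have "Dh p powr (- (hdim n - 2 * s) / 4) \<le> Dh p powr 0"
    using assms Dh_ge1[of p] by (intro powr_mono) auto
  then have "Dh p powr (- (hdim n - 2 * s) / 4) \<le> 1" using Dh_ge1[of p] by simp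
  then show ?thesis using assms mult_left_le[of "Dh p powr (- (hdim n - 2 * s) / 4)" C0] by (simp add: U_alt)
qed

lemma U_powr: assumes "C0 > 0" "2 * s < hdim n"
  shows "U_fun n C0 s p powr crit_exp n s = C0 powr crit_exp n s * Dh p powr (- hdim n / 2)"
proof -
  have "U_fun n C0 s p powr crit_exp n s = C0 powr crit_exp n s * (Dh p powr (- (hdim n - 2 * s) / 4)) powr crit_exp n s"
    using assms by (simp add: U_alt powr_mult)
  also have "(Dh p powr (- (hdim n - 2 * s) / 4)) powr crit_exp n s = Dh p powr (- hdim n / 2)"
  proof -
    have ne: "hdim n - 2 * s \<noteq> 0" using assms by simp
    have "(- (hdim n - 2 * s) / 4) * crit_exp n s = - hdim n / 2"
      unfolding crit_exp_def using ne by (simp add: field_simps)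
    then show ?thesis by (simp add: powr_powr)
  qed
  finally show ?thesis .
qed

lemma U_powr_le1: assumes "C0 > 0" "2 * s < hdim n"
  shows "U_fun n C0 s p powr crit_exp n s \<le> C0 powr crit_exp n s"
proof -
  have h: "hdim n > 0" using assms by (simp add: hdim_def)
  have "Dh p powr (- hdim n / 2) \<le> Dh p powr 0"
    using h Dh_ge1[of p] by (intro powr_mono) auto
  then have "Dh p powr (- hdim n / 2) \<le> 1" using Dh_ge1[of p] by simp
  then show ?thesis using mult_left_le[of "Dh p powr (- hdim n / 2)" "C0 powr crit_exp n s"]
    by (simp add: U_powr[OF assms])
qed

lemma U_powr_le_tail: assumes "C0 > 0" "2 * s < hdim n" "heis_norm p > 0"
  shows "U_fun n C0 s p powr crit_exp n s \<le> C0 powr crit_exp n s * heis_norm p powr (- 2 * hdim n)"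
proof -
  have h: "hdim n > 0" using assms by (simp add: hdim_def)
  have "Dh p powr (- hdim n / 2) \<le> (heis_norm p ^ 4) powr (- hdim n / 2)"
    using h assms(3) Dh_ge_h4[of p] by (intro powr_mono2') auto
  also have "(heis_norm p ^ 4) powr (- hdim n / 2) = heis_norm p powr (- 2 * hdim n)"
  proof -
    have "heis_norm p ^ 4 = heis_norm p powr 4" using powr_realpow[of "heis_norm p" 4] assms(3) by simp
    then show ?thesis by (simp add: powr_powr)
  qed
  finally show ?thesis unfolding U_powr[OF assms(1,2)] by (intro mult_left_mono) auto
qed

lemma hdim_eq: "hdim (TYPE('n::finite)) = real (2*CARD('n)+2)"
  by (simp add: hdim_def)

lemma integral_dil':
  fixes f :: "'n::finite heis \<Rightarrow> real"
  assumes [measurable]: "f \<in> borel_measurable borel" and a: "a > 0"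
  shows "(\<integral>p. f (dil a p) \<partial>lborel) = a powr (- hdim TYPE('n)) * integral\<^sup>L lborel f"
proof -
  have "integral\<^sup>L lborel f = a powr (hdim TYPE('n)) * (\<integral>p. f (dil a p) \<partial>lborel)"
  proof -
    have "a powr (hdim TYPE('n)) = a ^ (2*CARD('n)+2)" unfolding hdim_eq by (rule powr_realpow[OF a])
    then show ?thesis using integral_dil[OF assms] by simp
  qed
  then show ?thesis using a by (simp add: powr_minus field_simps)
qed

lemma tail_scale:
  assumes R: "R > 0" and e: "e > hdim TYPE('n::finite)"
  shows "integrable lborel (\<lambda>p::'n heis. indicator {p. R \<le> heis_norm p} p * heis_norm p powr (-e))"
    and "(\<integral>p. indicator {p. R \<le> heis_norm p} (p::'n heis) * heis_norm p powr (-e) \<partial>lborel)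
         = R powr (hdim TYPE('n) - e) * (\<integral>p. indicator {p. 1 \<le> heis_norm p} (p::'n heis) * heis_norm p powr (-e) \<partial>lborel)"
proof -
  define g where "g p = indicator {p. 1 \<le> heis_norm p} p * heis_norm p powr (-e)" for p :: "'n heis"
  have gm[measurable]: "g \<in> borel_measurable borel" unfolding g_def by measurable
  have gi: "integrable lborel g" unfolding g_def using e by (intro tail_integrable) (simp add: hdim_eq)
  have R1: "1 / R > 0" using R by simp
  have eq: "indicator {p. R \<le> heis_norm p} p * heis_norm p powr (-e) = R powr (-e) * g (dil (1/R) p)" for p :: "'n heis"
  proof -
    have hn: "heis_norm (dil (1/R) p) = heis_norm p / R" using R by (simp add: heis_norm_dil)
    have "(heis_norm p / R) powr (-e) = heis_norm p powr (-e) / R powr (-e)"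
      by (simp add: powr_divide heis_norm_nonneg R less_imp_le)
    then show ?thesis using R by (auto simp: g_def hn field_simps indicator_def)
  qed
  have "integrable lborel (\<lambda>p. g (dil (1/R) p))" using integrable_dil_iff[OF gm R1] gi by simp
  then show "integrable lborel (\<lambda>p::'n heis. indicator {p. R \<le> heis_norm p} p * heis_norm p powr (-e))"
    unfolding eq by simp
  have "(\<integral>p. indicator {p. R \<le> heis_norm p} (p::'n heis) * heis_norm p powr (-e) \<partial>lborel)
      = R powr (-e) * (\<integral>p. g (dil (1/R) p) \<partial>lborel)" unfolding eq by simp
  also have "\<dots> = R powr (-e) * ((1/R) powr (- hdim TYPE('n)) * integral\<^sup>L lborel g)"
    by (simp add: integral_dil'[OF gm R1])
  also have "\<dots> = R powr (hdim TYPE('n) - e) * integral\<^sup>L lborel g"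
    using R by (simp add: powr_divide powr_minus powr_diff field_simps)
  finally show "(\<integral>p. indicator {p. R \<le> heis_norm p} (p::'n heis) * heis_norm p powr (-e) \<partial>lborel)
         = R powr (hdim TYPE('n) - e) * (\<integral>p. indicator {p. 1 \<le> heis_norm p} (p::'n heis) * heis_norm p powr (-e) \<partial>lborel)"
    by (simp add: g_def[abs_def])
qed

lemma U_powr_integrable:
  assumes C0: "C0 > 0" and s: "2 * s < hdim TYPE('n::finite)"
  shows "integrable lborel (\<lambda>p::'n heis. U_fun TYPE('n) C0 s p powr crit_exp TYPE('n) s)"
proof -
  let ?q = "crit_exp TYPE('n) s"
  let ?Q = "hdim TYPE('n)"
  have Q: "?Q > 0" by (simp add: hdim_def)
  have ti: "integrable lborel (\<lambda>p::'n heis. indicator {p. 1 \<le> heis_norm p} p * heis_norm p powr (-(2 * ?Q)))"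
    using Q by (intro tail_scale(1)) auto
  have dom: "integrable lborel (\<lambda>p::'n heis. C0 powr ?q * (indicator (hball 1) p + indicator {p. 1 \<le> heis_norm p} p * heis_norm p powr (-(2 * ?Q))))"
    using ti emeasure_hball_finite[of 1, where 'n='n] by (intro integrable_mult_right integrable_add) auto
  have meas: "(\<lambda>p::'n heis. U_fun TYPE('n) C0 s p powr crit_exp TYPE('n) s) \<in> borel_measurable lborel"
    by measurable
  have ae: "AE p in lborel. norm (U_fun TYPE('n) C0 s p powr ?q) \<le> norm (C0 powr ?q * (indicator (hball 1) p + indicator {p. 1 \<le> heis_norm p} p * heis_norm p powr (-(2 * ?Q))))"
  proof (rule AE_I2)
    fix p :: "'n heis"
    show "norm (U_fun TYPE('n) C0 s p powr ?q) \<le> norm (C0 powr ?q * (indicator (hball 1) p + indicator {p. 1 \<le> heis_norm p} p * heis_norm p powr (-(2 * ?Q))))"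
    proof (cases "heis_norm p < 1")
      case True
      then show ?thesis using U_powr_le1[OF C0 s, of p] by (simp add: hball_def)
    next
      case False
      then have "heis_norm p > 0" by simp
      then show ?thesis using U_powr_le_tail[OF C0 s, of p] False by (simp add: hball_def)
    qed
  qed
  show ?thesis by (rule Bochner_Integration.integrable_bound[OF dom meas ae])
qed



lemma smooth_measurable: "smooth_fun (\<phi> :: 'a::euclidean_space \<Rightarrow> real) \<Longrightarrow> \<phi> \<in> borel_measurable borel"
  unfolding smooth_fun_def by (metis borel_measurable_continuous_onI)

lemma hdim_ge4: "hdim TYPE('n::finite) \<ge> 4"
proof -
  have "CARD('n) \<ge> 1" by (simp add: Suc_leI)
  then show ?thesis by (simp add: hdim_def)
qed

abbreviation "MU n C0 s \<equiv> integral\<^sup>L lborel (\<lambda>q. \<bar>U_fun n C0 s q\<bar> powr crit_exp n s)"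

lemma M_eq: "C0 > 0 \<Longrightarrow> MU n C0 s = (\<integral>p. U_fun n C0 s p powr crit_exp n s \<partial>lborel)"
  using U_pos[of C0 n s] by (simp add: less_imp_le)

lemma M_pos:
  assumes C0: "C0 > 0" and s: "2 * s < hdim TYPE('n::finite)"
  shows "MU TYPE('n) C0 s > 0"
proof -
  let ?f = "\<lambda>p::'n heis. U_fun TYPE('n) C0 s p powr crit_exp TYPE('n) s"
  have i: "integrable lborel ?f" by (rule U_powr_integrable[OF C0 s])
  have nn: "AE p in lborel. 0 \<le> ?f p" by simp
  have ge: "integral\<^sup>L lborel ?f \<ge> 0" by (simp add: integral_nonneg_AE)
  have "integral\<^sup>L lborel ?f \<noteq> 0"
  proof
    assume "integral\<^sup>L lborel ?f = 0"
    then have "AE p in lborel. ?f p = 0" using integral_nonneg_eq_0_iff_AE[OF i nn] by simp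
    then have "AE p in (lborel :: 'n heis measure). False"
      using U_pos[OF C0, of "TYPE('n)" s] by (simp add: less_imp_neq[symmetric])
    then have "AE p in (lborel :: 'n heis measure). p \<notin> hball 1" by (rule AE_mp) auto
    then have "emeasure lborel (hball 1 :: 'n heis set) = 0"
      by (subst (asm) AE_iff_measurable[of "hball 1"]) auto
    then show False using emeasure_hball_pos[of 1, where 'n='n] by simp
  qed
  then show ?thesis using ge M_eq[OF C0, of "TYPE('n)" s] by linarith
qed

lemma Ueps_formula:
  assumes "\<epsilon> > 0"
  shows "U_eps n C0 s S \<epsilon> p = \<epsilon> powr (- (hdim n - 2 * s) / 2) * U_fun n C0 s (dil (S powr (- 1 / (2 * s)) / \<epsilon>) p) / (MU n C0 s) powr (1 / crit_exp n s)"
  by (simp add: U_eps_def ustar_def ubar_def dil_dil)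

lemma Ueps_powr:
  assumes e: "\<epsilon> > 0" and s: "0 < s" "2 * s < hdim TYPE('n::finite)" and C0: "C0 > 0" and S: "S > 0"
  shows "\<bar>U_eps TYPE('n) C0 s S \<epsilon> p\<bar> powr crit_exp TYPE('n) s
     = \<epsilon> powr (- hdim TYPE('n)) / MU TYPE('n) C0 s * U_fun TYPE('n) C0 s (dil (S powr (- 1 / (2 * s)) / \<epsilon>) p) powr crit_exp TYPE('n) s"
proof -
  let ?Q = "hdim TYPE('n)" and ?q = "crit_exp TYPE('n) s" and ?M = "MU TYPE('n) C0 s"
  let ?V = "U_fun TYPE('n) C0 s (dil (S powr (- 1 / (2 * s)) / \<epsilon>) p)"
  have M: "?M > 0" by (rule M_pos[OF C0 s(2)])
  have V: "?V > 0" by (rule U_pos[OF C0])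
  have q: "?q > 0" using s by (simp add: crit_exp_def hdim_def)
  have ne: "?Q - 2 * s \<noteq> 0" using s by simp
  have aq: "(- (?Q - 2 * s) / 2) * ?q = - ?Q" unfolding crit_exp_def using ne by (simp add: field_simps)
  have K: "(?M powr (1 / ?q)) powr ?q = ?M" using M q by (simp add: powr_powr)
  have "\<bar>U_eps TYPE('n) C0 s S \<epsilon> p\<bar> = \<epsilon> powr (- (?Q - 2 * s) / 2) * ?V / ?M powr (1 / ?q)"
    unfolding Ueps_formula[OF e] using M V by simp
  then have "\<bar>U_eps TYPE('n) C0 s S \<epsilon> p\<bar> powr ?q = (\<epsilon> powr (- (?Q - 2 * s) / 2)) powr ?q * ?V powr ?q / (?M powr (1 / ?q)) powr ?q"
    by (simp add: powr_mult powr_divide)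
  also have "\<dots> = \<epsilon> powr (- ?Q) * ?V powr ?q / ?M"
  proof -
    have e1: "(\<epsilon> powr (- (?Q - 2 * s) / 2)) powr ?q = \<epsilon> powr (- ?Q)"
      by (simp only: powr_powr aq)
    show ?thesis unfolding K e1 ..
  qed
  finally show ?thesis by simp
qed

lemma Ueps_sq:
  assumes e: "\<epsilon> > 0" and s: "0 < s" "2 * s < hdim TYPE('n::finite)" and C0: "C0 > 0" and S: "S > 0"
  shows "\<bar>U_eps TYPE('n) C0 s S \<epsilon> p\<bar>\<^sup>2
     = \<epsilon> powr (- (hdim TYPE('n) - 2 * s)) / (MU TYPE('n) C0 s powr (1 / crit_exp TYPE('n) s))\<^sup>2 * (U_fun TYPE('n) C0 s (dil (S powr (- 1 / (2 * s)) / \<epsilon>) p))\<^sup>2"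
proof -
  let ?Q = "hdim TYPE('n)" and ?q = "crit_exp TYPE('n) s" and ?M = "MU TYPE('n) C0 s"
  have "(\<epsilon> powr (- (?Q - 2 * s) / 2))\<^sup>2 = \<epsilon> powr (- (?Q - 2 * s))"
    using e by (simp add: powr_power[symmetric] power2_eq_square powr_add[symmetric])
  then show ?thesis unfolding Ueps_formula[OF e]
    by (simp add: power_mult_distrib power_divide)
qed

lemma Ueps_le:
  assumes e: "\<epsilon> > 0" and s: "0 < s" "2 * s < hdim TYPE('n::finite)" and C0: "C0 > 0" and S: "S > 0"
  shows "\<bar>U_eps TYPE('n) C0 s S \<epsilon> p\<bar> \<le> \<epsilon> powr (- (hdim TYPE('n) - 2 * s) / 2) * C0 / (MU TYPE('n) C0 s powr (1 / crit_exp TYPE('n) s))"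
proof -
  let ?M = "MU TYPE('n) C0 s"
  let ?V = "U_fun TYPE('n) C0 s (dil (S powr (- 1 / (2 * s)) / \<epsilon>) p)"
  have M: "?M > 0" by (rule M_pos[OF C0 s(2)])
  have V: "?V > 0" by (rule U_pos[OF C0])
  have V1: "?V \<le> C0" by (rule U_le[OF C0]) (use s in simp)
  have "\<bar>U_eps TYPE('n) C0 s S \<epsilon> p\<bar> = \<epsilon> powr (- (hdim TYPE('n) - 2 * s) / 2) * ?V / ?M powr (1 / crit_exp TYPE('n) s)"
    unfolding Ueps_formula[OF e] using M V by simp
  also have "\<dots> \<le> \<epsilon> powr (- (hdim TYPE('n) - 2 * s) / 2) * C0 / ?M powr (1 / crit_exp TYPE('n) s)"
    using M V1 by (intro divide_right_mono mult_left_mono) auto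
  finally show ?thesis .
qed

lemma Ueps_measurable[measurable]:
  assumes "\<epsilon> > 0"
  shows "U_eps TYPE('n::finite) C0 s S \<epsilon> \<in> borel_measurable borel"
  unfolding Ueps_formula[OF assms, abs_def] by measurable



lemma part2:
  fixes \<phi> :: "'n::finite heis \<Rightarrow> real"
  assumes s: "0 < s" "s < 1" and C0: "C0 > 0" and S: "S > 0" and r: "r > 0"
    and \<phi>m[measurable]: "\<phi> \<in> borel_measurable borel" and \<phi>b: "\<And>p. 0 \<le> \<phi> p \<and> \<phi> p \<le> 1"
    and \<phi>1: "\<And>p. p \<in> hball r \<Longrightarrow> \<phi> p = 1"
  shows "(\<lambda>\<epsilon>. integral\<^sup>L lborel (\<lambda>p. \<bar>u_eps TYPE('n) C0 s S \<phi> \<epsilon> p\<bar> powr crit_exp TYPE('n) s)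
               - S powr (hdim TYPE('n) / (2 * s)))
           \<in> O[at_right 0](\<lambda>\<epsilon>. \<epsilon> powr hdim TYPE('n))"
proof -
  define Q where "Q = hdim TYPE('n)"
  define q where "q = crit_exp TYPE('n) s"
  define U where "U = U_fun TYPE('n) C0 s"
  define M where "M = MU TYPE('n) C0 s"
  define lm where "lm = S powr (- 1 / (2 * s))"
  define J where "J = (\<integral>p. indicator {p. 1 \<le> heis_norm p} (p::'n heis) * heis_norm p powr (-(2 * Q)) \<partial>lborel)"
  define Kc where "Kc = lm powr (-Q) * C0 powr q * J * (lm * r) powr (-Q) / M"
  have Q4: "Q \<ge> 4" unfolding Q_def by (rule hdim_ge4)
  have s2: "2 * s < hdim TYPE('n)" using Q4 s unfolding Q_def by linarith
  have q0: "q > 0" using s2 Q4 s unfolding q_def crit_exp_def Q_def by (simp add: divide_pos_pos)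
  have M0: "M > 0" unfolding M_def by (rule M_pos[OF C0 s2])
  have lm0: "lm > 0" using S by (simp add: lm_def)
  have MeqU: "M = (\<integral>p. U p powr q \<partial>lborel)" unfolding M_def U_def q_def by (rule M_eq[OF C0])
  have Ui: "integrable lborel (\<lambda>p::'n heis. U p powr q)" unfolding U_def q_def by (rule U_powr_integrable[OF C0 s2])
  have Um[measurable]: "U \<in> borel_measurable borel" unfolding U_def by simp
  have J0: "J \<ge> 0" unfolding J_def by (simp add: integral_nonneg_AE)
  have lmS: "lm powr (-Q) = S powr (hdim TYPE('n) / (2 * s))"
    unfolding lm_def Q_def using s by (simp add: powr_powr)
  have main: "\<bar>integral\<^sup>L lborel (\<lambda>p. \<bar>u_eps TYPE('n) C0 s S \<phi> \<epsilon> p\<bar> powr q) - lm powr (-Q)\<bar> \<le> Kc * \<epsilon> powr Q"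
    if e: "\<epsilon> > 0" for \<epsilon>
  proof -
    define c where "c = lm / \<epsilon>"
    have c0: "c > 0" using lm0 e by (simp add: c_def)
    define F where "F p = \<bar>U_eps TYPE('n) C0 s S \<epsilon> p\<bar> powr q" for p :: "'n heis"
    have Fe: "F p = \<epsilon> powr (-Q) / M * U (dil c p) powr q" for p
      unfolding F_def Q_def M_def U_def c_def lm_def q_def by (rule Ueps_powr[OF e s(1) s2 C0 S])
    have Ffun: "F = (\<lambda>p. \<epsilon> powr (-Q) / M * U (dil c p) powr q)" using Fe by (simp add: fun_eq_iff)
    have Wm[measurable]: "(\<lambda>p::'n heis. U p powr q) \<in> borel_measurable borel" by measurable
    have Wi: "integrable lborel (\<lambda>p::'n heis. U (dil c p) powr q)"
      using integrable_dil_iff[OF Wm c0] Ui by simp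
    have Wint: "(\<integral>p. U (dil c p) powr q \<partial>lborel) = c powr (-Q) * M"
      unfolding MeqU Q_def by (rule integral_dil'[OF Wm c0])
    have Fm[measurable]: "F \<in> borel_measurable borel" unfolding Ffun by measurable
    have Fi: "integrable lborel F" unfolding Ffun using Wi by simp
    have "integral\<^sup>L lborel F = \<epsilon> powr (-Q) / M * (c powr (-Q) * M)"
      unfolding Ffun using Wint by simp
    also have "\<dots> = (\<epsilon> * c) powr (-Q)" using M0 by (simp add: powr_mult)
    also have "\<epsilon> * c = lm" using e by (simp add: c_def)
    finally have Fint: "integral\<^sup>L lborel F = lm powr (-Q)" .
    have uF: "\<bar>u_eps TYPE('n) C0 s S \<phi> \<epsilon> p\<bar> powr q = F p * \<phi> p powr q" for p
      unfolding u_eps_def F_def using \<phi>b[of p] by (simp add: abs_mult powr_mult)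
    have \<phi>q: "\<phi> p powr q \<le> 1" for p
    proof -
      have "\<phi> p powr q \<le> 1 powr q" using \<phi>b[of p] q0 by (intro powr_mono2) auto
      then show ?thesis by simp
    qed
    have F0: "F p \<ge> 0" for p by (simp add: F_def)
    have ufun: "(\<lambda>p. \<bar>u_eps TYPE('n) C0 s S \<phi> \<epsilon> p\<bar> powr q) = (\<lambda>p. F p * \<phi> p powr q)"
      using uF by (simp add: fun_eq_iff)
    have ui: "integrable lborel (\<lambda>p. F p * \<phi> p powr q)"
    proof (rule Bochner_Integration.integrable_bound[OF Fi])
      show "(\<lambda>p. F p * \<phi> p powr q) \<in> borel_measurable lborel" by measurable
      show "AE p in lborel. norm (F p * \<phi> p powr q) \<le> norm (F p)"
        using F0 \<phi>q by (auto intro!: AE_I2 simp: abs_mult mult_left_le)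
    qed
    have up: "(\<integral>p. F p * \<phi> p powr q \<partial>lborel) \<le> integral\<^sup>L lborel F"
      by (rule integral_mono[OF ui Fi]) (use F0 \<phi>q in \<open>simp add: mult_left_le\<close>)
    have Bi: "integrable lborel (\<lambda>p. F p * indicator (hball r) p)"
      by (rule integrable_real_mult_indicator[OF _ Fi]) simp
    have Ti: "integrable lborel (\<lambda>p. F p * indicator {p. r \<le> heis_norm p} p)"
      by (rule integrable_real_mult_indicator[OF _ Fi]) simp
    have lo: "(\<integral>p. F p * indicator (hball r) p \<partial>lborel) \<le> (\<integral>p. F p * \<phi> p powr q \<partial>lborel)"
      by (rule integral_mono[OF Bi ui]) (use F0 \<phi>1 \<phi>b in \<open>auto simp: indicator_def\<close>)
    have spl: "integral\<^sup>L lborel F = (\<integral>p. F p * indicator (hball r) p \<partial>lborel) + (\<integral>p. F p * indicator {p. r \<le> heis_norm p} p \<partial>lborel)"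
    proof -
      have "F = (\<lambda>p. F p * indicator (hball r) p + F p * indicator {p. r \<le> heis_norm p} p)"
        by (auto simp: fun_eq_iff hball_def indicator_def)
      then have "integral\<^sup>L lborel F = (\<integral>p. F p * indicator (hball r) p + F p * indicator {p. r \<le> heis_norm p} p \<partial>lborel)"
        by metis
      also have "\<dots> = (\<integral>p. F p * indicator (hball r) p \<partial>lborel) + (\<integral>p. F p * indicator {p. r \<le> heis_norm p} p \<partial>lborel)"
        by (rule Bochner_Integration.integral_add[OF Bi Ti])
      finally show ?thesis .
    qed
    define R where "R = c * r"
    have R0: "R > 0" using c0 r by (simp add: R_def)
    have T1: "(\<integral>p. U (dil c p) powr q * indicator {p. r \<le> heis_norm p} p \<partial>lborel)
        = c powr (-Q) * (\<integral>p. U p powr q * indicator {p. R \<le> heis_norm p} (p::'n heis) \<partial>lborel)"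
    proof -
      have fm: "(\<lambda>p::'n heis. U p powr q * indicator {p. R \<le> heis_norm p} p) \<in> borel_measurable borel"
        by measurable
      have "(\<lambda>p::'n heis. U (dil c p) powr q * indicator {p. R \<le> heis_norm p} (dil c p))
          = (\<lambda>p. U (dil c p) powr q * indicator {p. r \<le> heis_norm p} p)"
        using c0 by (simp add: fun_eq_iff indicator_def heis_norm_dil R_def)
      then show ?thesis using integral_dil'[OF fm c0] unfolding Q_def by simp
    qed
    have T2: "(\<integral>p. U p powr q * indicator {p. R \<le> heis_norm p} (p::'n heis) \<partial>lborel)
        \<le> C0 powr q * (R powr (-Q) * J)"
    proof -
      have ti: "integrable lborel (\<lambda>p::'n heis. indicator {p. R \<le> heis_norm p} p * heis_norm p powr (-(2 * Q)))"
        using R0 Q4 unfolding Q_def by (intro tail_scale(1)) auto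
      have tv: "(\<integral>p. indicator {p. R \<le> heis_norm p} (p::'n heis) * heis_norm p powr (-(2 * Q)) \<partial>lborel) = R powr (-Q) * J"
        using tail_scale(2)[OF R0, of "2 * Q", where 'n='n] R0 Q4 unfolding J_def Q_def by simp
      have "(\<integral>p. U p powr q * indicator {p. R \<le> heis_norm p} (p::'n heis) \<partial>lborel)
          \<le> (\<integral>p. C0 powr q * (indicator {p. R \<le> heis_norm p} (p::'n heis) * heis_norm p powr (-(2 * Q))) \<partial>lborel)"
      proof (rule integral_mono)
        show "integrable lborel (\<lambda>p::'n heis. U p powr q * indicator {p. R \<le> heis_norm p} p)"
          by (rule integrable_real_mult_indicator[OF _ Ui]) simp
        show "integrable lborel (\<lambda>p::'n heis. C0 powr q * (indicator {p. R \<le> heis_norm p} p * heis_norm p powr (-(2 * Q))))"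
          using ti by simp
        fix p :: "'n heis"
        show "U p powr q * indicator {p. R \<le> heis_norm p} p \<le> C0 powr q * (indicator {p. R \<le> heis_norm p} p * heis_norm p powr (-(2 * Q)))"
        proof (cases "R \<le> heis_norm p")
          case True
          then have "heis_norm p > 0" using R0 by simp
          then show ?thesis using True U_powr_le_tail[OF C0 s2, of p]
            unfolding U_def q_def Q_def by simp
        qed simp
      qed
      also have "\<dots> = C0 powr q * (R powr (-Q) * J)" using tv by simp
      finally show ?thesis .
    qed
    have Tb: "(\<integral>p. F p * indicator {p. r \<le> heis_norm p} p \<partial>lborel) \<le> Kc * \<epsilon> powr Q"
    proof -
      have "(\<integral>p. F p * indicator {p. r \<le> heis_norm p} p \<partial>lborel)
          = \<epsilon> powr (-Q) / M * (\<integral>p. U (dil c p) powr q * indicator {p. r \<le> heis_norm p} p \<partial>lborel)"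
        unfolding Ffun by (simp add: mult.assoc)
      also have "\<dots> = \<epsilon> powr (-Q) / M * (c powr (-Q) * (\<integral>p. U p powr q * indicator {p. R \<le> heis_norm p} (p::'n heis) \<partial>lborel))"
        unfolding T1 ..
      also have "\<dots> \<le> \<epsilon> powr (-Q) / M * (c powr (-Q) * (C0 powr q * (R powr (-Q) * J)))"
        using T2 M0 by (intro mult_left_mono) auto
      also have "\<dots> = Kc * \<epsilon> powr Q"
      proof -
        have h1: "c powr (-Q) = lm powr (-Q) * \<epsilon> powr Q"
        proof -
          have "c powr (-Q) = lm powr (-Q) / \<epsilon> powr (-Q)" unfolding c_def
            by (rule powr_divide)
          then show ?thesis by (simp add: powr_minus divide_inverse)
        qed
        have h2: "R powr (-Q) = (lm * r) powr (-Q) * \<epsilon> powr Q"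
        proof -
          have "R = (lm * r) / \<epsilon>" by (simp add: R_def c_def)
          then have "R powr (-Q) = (lm * r) powr (-Q) / \<epsilon> powr (-Q)"
            by (simp only: powr_divide)
          then show ?thesis by (simp add: powr_minus divide_inverse)
        qed
        have h3: "\<epsilon> powr (-Q) = 1 / \<epsilon> powr Q" by (simp add: powr_minus_divide)
        have h4: "\<epsilon> powr Q > 0" using e by simp
        show ?thesis unfolding h1 h2 h3 Kc_def using h4 M0 by (simp add: field_simps)
      qed
      finally show ?thesis .
    qed
    show ?thesis
      using up lo spl Tb Fint unfolding ufun by linarith
  qed
  show ?thesis
  proof (rule bigoI[of _ Kc])
    show "\<forall>\<^sub>F \<epsilon> in at_right 0. norm (integral\<^sup>L lborel (\<lambda>p. \<bar>u_eps TYPE('n) C0 s S \<phi> \<epsilon> p\<bar> powr crit_exp TYPE('n) s)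
               - S powr (hdim TYPE('n) / (2 * s))) \<le> Kc * norm (\<epsilon> powr hdim TYPE('n))"
    proof (rule eventually_at_rightI[of 0 1])
      fix \<epsilon> :: real assume "\<epsilon> \<in> {0<..<1}"
      then have e: "\<epsilon> > 0" by simp
      show "norm (integral\<^sup>L lborel (\<lambda>p. \<bar>u_eps TYPE('n) C0 s S \<phi> \<epsilon> p\<bar> powr crit_exp TYPE('n) s)
               - S powr (hdim TYPE('n) / (2 * s))) \<le> Kc * norm (\<epsilon> powr hdim TYPE('n))"
        using main[OF e] lmS unfolding q_def Q_def by simp
    qed simp
  qed
qed

lemma hball_bounded_integrable:
  fixes f :: "'n::finite heis \<Rightarrow> real"
  assumes fm: "f \<in> borel_measurable borel" and b: "\<And>p. \<bar>f p\<bar> \<le> B * indicator (hball R) p"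
  shows "integrable lborel f"
proof -
  have dom: "integrable lborel (\<lambda>p::'n heis. B * indicator (hball R) p)"
    using emeasure_hball_finite[of R, where 'n='n] by (intro integrable_mult_right) auto
  have fm': "f \<in> borel_measurable lborel" using fm by simp
  have ae: "AE p in lborel. norm (f p) \<le> norm (B * indicator (hball R) p)"
    using b by (intro AE_I2) (smt (verit) real_norm_def)
  show ?thesis by (rule Bochner_Integration.integrable_bound[OF dom fm' ae])
qed

lemma part1:
  fixes \<phi> :: "'n::finite heis \<Rightarrow> real"
  assumes s: "0 < s" "s < 1" and C0: "C0 > 0" and S: "S > 0" and r: "r > 0"
    and \<phi>m[measurable]: "\<phi> \<in> borel_measurable borel" and \<phi>b: "\<And>p. 0 \<le> \<phi> p \<and> \<phi> p \<le> 1"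
    and \<phi>1: "\<And>p. p \<in> hball r \<Longrightarrow> \<phi> p = 1"
    and \<phi>0: "\<And>p. p \<notin> hball (2 * r) \<Longrightarrow> \<phi> p = 0"
  shows "\<exists>C>0. \<exists>g :: real \<Rightarrow> real.
            g \<in> O[at_right 0](\<lambda>\<epsilon>. \<epsilon> powr (hdim TYPE('n) - 4 * s)) \<and>
            (\<forall>\<^sub>F \<epsilon> in at_right 0.
               integral\<^sup>L lborel (\<lambda>p. \<bar>u_eps TYPE('n) C0 s S \<phi> \<epsilon> p\<bar>\<^sup>2)
                 \<ge> g \<epsilon> + C * \<epsilon> powr (2 * s))"
proof -
  define Q where "Q = hdim TYPE('n)"
  define q where "q = crit_exp TYPE('n) s"
  define U where "U = U_fun TYPE('n) C0 s"
  define M where "M = MU TYPE('n) C0 s"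
  define K where "K = M powr (1 / q)"
  define lm where "lm = S powr (- 1 / (2 * s))"
  define G where "G = (\<integral>p. (U p)\<^sup>2 * indicator (hball (lm * r)) (p::'n heis) \<partial>lborel)"
  define C where "C = lm powr (-Q) / K\<^sup>2 * G"
  have Q4: "Q \<ge> 4" unfolding Q_def by (rule hdim_ge4)
  have s2: "2 * s < hdim TYPE('n)" using Q4 s unfolding Q_def by linarith
  have M0: "M > 0" unfolding M_def by (rule M_pos[OF C0 s2])
  have K0: "K > 0" using M0 by (simp add: K_def)
  have lm0: "lm > 0" using S by (simp add: lm_def)
  have Um[measurable]: "U \<in> borel_measurable borel" unfolding U_def by simp
  have U0: "U p > 0" for p unfolding U_def by (rule U_pos[OF C0])
  have UC: "U p \<le> C0" for p unfolding U_def by (rule U_le[OF C0]) (use s2 in simp)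
  have U2: "(U p)\<^sup>2 \<le> C0\<^sup>2" for p using U0[of p] UC[of p] by (simp add: power_mono less_imp_le)
  have Ui: "integrable lborel (\<lambda>p::'n heis. (U p)\<^sup>2 * indicator (hball R) p)" for R
    by (rule hball_bounded_integrable[where B="C0\<^sup>2" and R=R]) (use U2 in \<open>auto simp: indicator_def\<close>)
  have Gpos: "G > 0"
  proof -
    have nn: "AE p in lborel. 0 \<le> (U p)\<^sup>2 * indicator (hball (lm * r)) (p::'n heis)" by simp
    have ge: "G \<ge> 0" unfolding G_def by (simp add: integral_nonneg_AE)
    have "G \<noteq> 0"
    proof
      assume "G = 0"
      then have "AE p in lborel. (U p)\<^sup>2 * indicator (hball (lm * r)) (p::'n heis) = 0"
        using integral_nonneg_eq_0_iff_AE[OF Ui nn] unfolding G_def by simp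
      then have "AE p in (lborel :: 'n heis measure). p \<notin> hball (lm * r)"
        using U0 by (simp add: less_imp_neq[symmetric] indicator_def split: if_splits)
      then have "emeasure lborel (hball (lm * r) :: 'n heis set) = 0"
        by (subst (asm) AE_iff_measurable[of "hball (lm * r)"]) auto
      then show False using emeasure_hball_pos[of "lm * r", where 'n='n] lm0 r by simp
    qed
    then show ?thesis using ge by linarith
  qed
  have C0': "C > 0" unfolding C_def using Gpos K0 lm0 by simp
  have ev: "\<forall>\<^sub>F \<epsilon> in at_right 0.
               integral\<^sup>L lborel (\<lambda>p. \<bar>u_eps TYPE('n) C0 s S \<phi> \<epsilon> p\<bar>\<^sup>2) \<ge> 0 + C * \<epsilon> powr (2 * s)"
  proof (rule eventually_at_rightI[of 0 1])
    fix \<epsilon> :: real assume "\<epsilon> \<in> {0<..<1}"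
    then have e: "\<epsilon> > 0" and e1: "\<epsilon> < 1" by auto
    define c where "c = lm / \<epsilon>"
    have c0: "c > 0" using lm0 e by (simp add: c_def)
    have clm: "lm \<le> c" using lm0 e e1 by (simp add: c_def field_simps)
    define a where "a = \<epsilon> powr (- (Q - 2 * s)) / K\<^sup>2"
    have a0: "a \<ge> 0" by (simp add: a_def)
    have Usq: "\<bar>U_eps TYPE('n) C0 s S \<epsilon> p\<bar>\<^sup>2 = a * (U (dil c p))\<^sup>2" for p
      unfolding a_def K_def M_def Q_def U_def c_def lm_def q_def by (rule Ueps_sq[OF e s(1) s2 C0 S])
    have uu: "\<bar>u_eps TYPE('n) C0 s S \<phi> \<epsilon> p\<bar>\<^sup>2 = a * (U (dil c p))\<^sup>2 * (\<phi> p)\<^sup>2" for p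
      unfolding u_eps_def using Usq[of p] by (simp add: power_mult_distrib abs_mult)
    have ufun: "(\<lambda>p. \<bar>u_eps TYPE('n) C0 s S \<phi> \<epsilon> p\<bar>\<^sup>2) = (\<lambda>p. a * (U (dil c p))\<^sup>2 * (\<phi> p)\<^sup>2)"
      using uu by (simp add: fun_eq_iff)
    have ui: "integrable lborel (\<lambda>p. a * (U (dil c p))\<^sup>2 * (\<phi> p)\<^sup>2)"
    proof (rule hball_bounded_integrable[where B="a * C0\<^sup>2" and R="2 * r"])
      show "(\<lambda>p. a * (U (dil c p))\<^sup>2 * (\<phi> p)\<^sup>2) \<in> borel_measurable borel" by measurable
      fix p :: "'n heis"
      have p1: "(\<phi> p)\<^sup>2 \<le> 1" using \<phi>b[of p] by (simp add: power_le_one)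
      have "a * (U (dil c p))\<^sup>2 * (\<phi> p)\<^sup>2 \<le> a * C0\<^sup>2 * 1"
        using a0 U2[of "dil c p"] p1 by (intro mult_mono mult_left_mono) auto
      then show "\<bar>a * (U (dil c p))\<^sup>2 * (\<phi> p)\<^sup>2\<bar> \<le> a * C0\<^sup>2 * indicator (hball (2 * r)) p"
        using \<phi>0[of p] a0 by (auto simp: indicator_def)
    qed
    have step1: "(\<integral>p. a * ((U (dil c p))\<^sup>2 * indicator (hball r) p) \<partial>lborel) \<le> (\<integral>p. a * (U (dil c p))\<^sup>2 * (\<phi> p)\<^sup>2 \<partial>lborel)"
    proof (rule integral_mono'[OF ui])
      fix p :: "'n heis"
      show "a * ((U (dil c p))\<^sup>2 * indicator (hball r) p) \<le> a * (U (dil c p))\<^sup>2 * (\<phi> p)\<^sup>2"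
        using \<phi>1[of p] a0 by (auto simp: indicator_def)
      show "0 \<le> a * (U (dil c p))\<^sup>2 * (\<phi> p)\<^sup>2" using a0 by simp
    qed
    have fm: "(\<lambda>p::'n heis. (U p)\<^sup>2 * indicator (hball (c * r)) p) \<in> borel_measurable borel" by measurable
    have step2: "(\<integral>p. (U (dil c p))\<^sup>2 * indicator (hball r) p \<partial>lborel)
        = c powr (-Q) * (\<integral>p. (U p)\<^sup>2 * indicator (hball (c * r)) (p::'n heis) \<partial>lborel)"
    proof -
      have "(\<lambda>p::'n heis. (U (dil c p))\<^sup>2 * indicator (hball (c * r)) (dil c p))
          = (\<lambda>p. (U (dil c p))\<^sup>2 * indicator (hball r) p)"
        using c0 by (simp add: fun_eq_iff indicator_def hball_dil)
      then show ?thesis using integral_dil'[OF fm c0] unfolding Q_def by simp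
    qed
    have step3: "G \<le> (\<integral>p. (U p)\<^sup>2 * indicator (hball (c * r)) (p::'n heis) \<partial>lborel)"
      unfolding G_def
    proof (rule integral_mono'[OF Ui])
      fix p :: "'n heis"
      have "p \<in> hball (lm * r) \<Longrightarrow> p \<in> hball (c * r)"
        using clm r by (simp add: hball_def) (smt (verit) mult_right_mono)
      then show "(U p)\<^sup>2 * indicator (hball (lm * r)) p \<le> (U p)\<^sup>2 * indicator (hball (c * r)) p"
        by (auto simp: indicator_def)
    qed simp
    have "C * \<epsilon> powr (2 * s) = a * (c powr (-Q) * G)"
    proof -
      have h1: "c powr (-Q) = lm powr (-Q) * \<epsilon> powr Q"
      proof -
        have "c powr (-Q) = lm powr (-Q) / \<epsilon> powr (-Q)" unfolding c_def by (rule powr_divide)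
        then show ?thesis by (simp add: powr_minus divide_inverse)
      qed
      have h2: "\<epsilon> powr (- (Q - 2 * s)) * \<epsilon> powr Q = \<epsilon> powr (2 * s)"
        by (simp add: powr_add[symmetric])
      show ?thesis unfolding C_def a_def h1 using h2 by (simp add: field_simps)
    qed
    also have "\<dots> \<le> a * (c powr (-Q) * (\<integral>p. (U p)\<^sup>2 * indicator (hball (c * r)) (p::'n heis) \<partial>lborel))"
      using step3 a0 by (intro mult_left_mono) auto
    also have "\<dots> = (\<integral>p. a * ((U (dil c p))\<^sup>2 * indicator (hball r) p) \<partial>lborel)"
      unfolding step2[symmetric] by simp
    also have "\<dots> \<le> (\<integral>p. a * (U (dil c p))\<^sup>2 * (\<phi> p)\<^sup>2 \<partial>lborel)" by (rule step1)
    finally show "integral\<^sup>L lborel (\<lambda>p. \<bar>u_eps TYPE('n) C0 s S \<phi> \<epsilon> p\<bar>\<^sup>2) \<ge> 0 + C * \<epsilon> powr (2 * s)"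
      unfolding ufun by simp
  qed simp
  show ?thesis
    by (rule exI[of _ C], rule conjI[OF C0'], rule exI[of _ "\<lambda>_. 0"]) (use ev in simp)
qed


theorem lemma3p15:
  fixes s C0 S r :: real and \<Omega> :: "'n::finite heis set" and \<phi> :: "'n heis \<Rightarrow> real"
  assumes "0 < s" "s < 1" "0 < C0" "0 < S"
    and "bounded \<Omega>" "open \<Omega>" "0 < r" "hball (4 * r) \<subseteq> \<Omega>"
    and "smooth_fun \<phi>" "\<And>p. 0 \<le> \<phi> p \<and> \<phi> p \<le> 1"
    and "\<And>p. p \<in> hball r \<Longrightarrow> \<phi> p = 1"
    and "\<And>p. p \<notin> hball (2 * r) \<Longrightarrow> \<phi> p = 0"
  shows "(\<exists>C>0. \<exists>g :: real \<Rightarrow> real.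
            g \<in> O[at_right 0](\<lambda>\<epsilon>. \<epsilon> powr (hdim TYPE('n) - 4 * s)) \<and>
            (\<forall>\<^sub>F \<epsilon> in at_right 0.
               integral\<^sup>L lborel (\<lambda>p. \<bar>u_eps TYPE('n) C0 s S \<phi> \<epsilon> p\<bar>\<^sup>2)
                 \<ge> g \<epsilon> + C * \<epsilon> powr (2 * s))) \<and>
         ((\<lambda>\<epsilon>. integral\<^sup>L lborel (\<lambda>p. \<bar>u_eps TYPE('n) C0 s S \<phi> \<epsilon> p\<bar> powr crit_exp TYPE('n) s)
               - S powr (hdim TYPE('n) / (2 * s)))
           \<in> O[at_right 0](\<lambda>\<epsilon>. \<epsilon> powr hdim TYPE('n)))"
proof -
  have \<phi>m: "\<phi> \<in> borel_measurable borel" by (rule smooth_measurable[OF assms(9)])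
  show ?thesis
    using part1[OF assms(1,2,3,4,7) \<phi>m assms(10,11,12)] part2[OF assms(1,2,3,4,7) \<phi>m assms(10,11)]
    by blast
qed

end
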